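(* Let $\mathcal{P}$ be a finite set of atomic propositions, let $u \in (2^{\mathcal{P}})^\ast$, $v \in (2^{\mathcal{P}})^+$, let $\rho$ be a regular expression, and let $m$ be the number of states of the minimal deterministic finite automaton over the alphabet $2^{\mathcal{P}}$ recognizing $L(\rho)$. Suppose $uv^\omega[i,j) \vdash \rho$ for some $i, j \in \mathbb{N}$ with $i \le |u| < j$. Then there exists $k \in \mathbb{N}$ with $|u| \le k \le |u| + m|v|$ such that $uv^\omega[i,k) \vdash \rho$ and $k \equiv j \pmod{|v|}$.
   Context: For a word $\alpha = a_0a_1\ldots$ and $i\le j$, $\alpha[i,j) = a_i\ldots a_{j-1}$ and $\alpha[i]=a_i$; $uv^\omega = uvvv\ldots$. Regular expressions: atomic expressions $\xi ::= p \in \mathcal{P} \mid \lnot \xi \mid \xi \lor \xi$, with $[\![p]\!] = \{A \subseteq \mathcal{P} : p \in A\}$, $[\![\lnot\xi]\!] = 2^{\mathcal{P}} \setminus [\![\xi]\!]$, $[\![\xi_1 \lor \xi_2]\!] = [\![\xi_1]\!] \cup [\![\xi_2]\!]$. Regular expressions $\rho ::= \varepsilon \mid \xi \mid \rho + \rho \mid \rho \circ \rho \mid \rho^\ast$. Matching relation on infixes of a word $w$: $w[i,j) \vdash \varepsilon$ iff $j=i$; $w[i,j) \vdash \xi$ iff $j=i+1$ and $w[i] \in [\![\xi]\!]$; $w[i,j)\vdash \rho_1+\rho_2$ iff $w[i,j)\vdash\rho_1$ or $w[i,j)\vdash\rho_2$; $w[i,j)\vdash \rho_1\circ\rho_2$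 iff there is $k\in\{i,\ldots,j\}$ with $w[i,k)\vdash\rho_1$ and $w[k,j)\vdash\rho_2$; $w[i,j)\vdash\rho^\ast$ iff $j=i$ or there is $k\in\{i+1,\ldots,j\}$ with $w[i,k)\vdash\rho$ and $w[k,j)\vdash\rho^\ast$. $L(\rho) = \{ w \in (2^{\mathcal{P}})^\ast : w[0,|w|) \vdash \rho\}$. *)

theory Defs
  imports Main
begin

(* Atomic propositions: a finite type 'p (so P = UNIV :: 'p set, finite).
   Letters of the alphabet 2^P are values of type 'p set. *)

datatype 'p atomic = AProp 'p | ANot "'p atomic" | AOr "'p atomic" "'p atomic"

fun sem_atomic :: "'p atomic \<Rightarrow> 'p set set" where
  "sem_atomic (AProp p) = {A. p \<in> A}"
| "sem_atomic (ANot x) = UNIV - sem_atomic x"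
| "sem_atomic (AOr x y) = sem_atomic x \<union> sem_atomic y"

datatype 'p rexp = Eps | Atom "'p atomic" | Plus "'p rexp" "'p rexp"
  | Conc "'p rexp" "'p rexp" | Star "'p rexp"

(* matching relation  w[i,j) |- rho  on a (finite or infinite) word given as a
   function from positions to letters *)
inductive matches :: "(nat \<Rightarrow> 'p set) \<Rightarrow> nat \<Rightarrow> nat \<Rightarrow> 'p rexp \<Rightarrow> bool" where
  m_eps: "matches w i i Eps"
| m_atom: "w i \<in> sem_atomic x \<Longrightarrow> matches w i (Suc i) (Atom x)"
| m_plus1: "matches w i j r1 \<Longrightarrow> matches w i j (Plus r1 r2)"
| m_plus2: "matches w i j r2 \<Longrightarrow> matches w i j (Plus r1 r2)"
| m_conc: "\<lbrakk>i \<le> k; k \<le> j; matches w i k r1; matches w k j r2\<rbrakk> \<Longrightarrow> matches w i j (Conc r1 r2)"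
| m_star0: "matches w i i (Star r)"
| m_starS: "\<lbrakk>i < k; k \<le> j; matches w i k r; matches w k j (Star r)\<rbrakk> \<Longrightarrow> matches w i j (Star r)"

definition lang :: "'p rexp \<Rightarrow> 'p set list set" where
  "lang r = {w. matches (\<lambda>n. w ! n) 0 (length w) r}"

definition lasso :: "'a list \<Rightarrow> 'a list \<Rightarrow> nat \<Rightarrow> 'a" where
  "lasso u v n = (if n < length u then u ! n else v ! ((n - length u) mod length v))"

type_synonym 'a dfa = "nat set \<times> nat \<times> (nat \<Rightarrow> 'a \<Rightarrow> nat) \<times> nat set"

definition is_dfa :: "'a dfa \<Rightarrow> bool" where
  "is_dfa A = (case A of (Q, q0, \<delta>, F) \<Rightarrow>
     finite Q \<and> q0 \<in> Q \<and> F \<subseteq> Q \<and> (\<forall>q\<in>Q. \<forall>a. \<delta> q a \<in> Q))"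

definition dfa_lang :: "'a dfa \<Rightarrow> 'a list set" where
  "dfa_lang A = (case A of (Q, q0, \<delta>, F) \<Rightarrow> {w. foldl \<delta> q0 w \<in> F})"

definition dfa_states :: "'a dfa \<Rightarrow> nat set" where
  "dfa_states A = fst A"

definition min_dfa_size :: "'a list set \<Rightarrow> nat" where
  "min_dfa_size L = (LEAST n. \<exists>A. is_dfa A \<and> dfa_lang A = L \<and> card (dfa_states A) = n)"

end

theory Submission
  imports Defs
begin

definition conc :: "'a list set \<Rightarrow> 'a list set \<Rightarrow> 'a list set" where
  "conc A B = {a @ b | a b. a \<in> A \<and> b \<in> B}"

inductive_set star :: "'a list set \<Rightarrow> 'a list set" for A where
  st_nil: "[] \<in> star A"
| st_app: "a \<in> A \<Longrightarrow> y \<in> star A \<Longrightarrow> a @ y \<in> star A"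

fun Lr :: "'p rexp \<Rightarrow> 'p set list set" where
  "Lr Eps = {[]}"
| "Lr (Atom x) = {[a] | a. a \<in> sem_atomic x}"
| "Lr (Plus r s) = Lr r \<union> Lr s"
| "Lr (Conc r s) = conc (Lr r) (Lr s)"
| "Lr (Star r) = star (Lr r)"

definition Deriv :: "'a list \<Rightarrow> 'a list set \<Rightarrow> 'a list set" where
  "Deriv w X = {x. w @ x \<in> X}"

lemma Deriv_Deriv: "Deriv w (Deriv w' X) = Deriv (w' @ w) X"
  by (simp add: Deriv_def)

lemma star_app: "x \<in> star A \<Longrightarrow> y \<in> star A \<Longrightarrow> x @ y \<in> star A"
  by (induction x rule: star.induct) (auto intro: star.intros)

lemma conc_star: "x \<in> A \<Longrightarrow> y \<in> star A \<Longrightarrow> x @ y \<in> star A"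
  by (rule st_app)

lemma star_split:
  assumes "z \<in> star A"
  shows "\<And>w x. z = w @ x \<Longrightarrow> w = [] \<or> (\<exists>w1 w2 x1 x2. w = w1 @ w2 \<and> w1 \<in> star A
            \<and> x = x1 @ x2 \<and> w2 @ x1 \<in> A \<and> x2 \<in> star A)"
  using assms
proof (induction z rule: star.induct)
  case st_nil
  then show ?case by simp
next
  case (st_app a y)
  show ?case
  proof (cases "w = []")
    case True then show ?thesis by simp
  next
    case False
    show ?thesis
    proof (cases "length w \<le> length a")
      case True
      define x1 where "x1 = take (length a - length w) x"
      from st_app.prems True have "a = w @ x1" "x = x1 @ y"
        by (auto simp: append_eq_append_conv2 append_eq_conv_conj x1_def)
      then show ?thesis using st_app.hyps False
        by (intro disjI2 exI[of _ "[]"] exI[of _ w] exI[of _ x1] exI[of _ y]) (auto intro: star.intros)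
    next
      case gt: False
      define w' where "w' = drop (length a) w"
      from st_app.prems gt have w': "w = a @ w'" "y = w' @ x"
        by (auto simp: append_eq_append_conv2 append_eq_conv_conj w'_def)
           (metis append_take_drop_id)
      with gt have "w' \<noteq> []" by auto
      with st_app.IH[OF w'(2)] obtain w1 w2 x1 x2 where
        h: "w' = w1 @ w2" "w1 \<in> star A" "x = x1 @ x2" "w2 @ x1 \<in> A" "x2 \<in> star A" by blast
      show ?thesis
        by (intro disjI2 exI[of _ "a @ w1"] exI[of _ w2] exI[of _ x1] exI[of _ x2])
           (use h w' st_app.hyps in \<open>auto intro: star.intros\<close>)
    qed
  qed
qed

lemma Deriv_star:
  "Deriv w (star A) = (if w \<in> star A then star A else {}) \<union>
     (\<Union>w2\<in>{w2. \<exists>w1. w = w1 @ w2 \<and> w1 \<in> star A}. conc (Deriv w2 A) (star A))"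
proof (intro equalityI subsetI)
  fix x assume "x \<in> Deriv w (star A)"
  hence x: "w @ x \<in> star A" by (simp add: Deriv_def)
  from star_split[OF x refl] show "x \<in> (if w \<in> star A then star A else {}) \<union>
     (\<Union>w2\<in>{w2. \<exists>w1. w = w1 @ w2 \<and> w1 \<in> star A}. conc (Deriv w2 A) (star A))"
  proof
    assume "w = []" then show ?thesis using x by (auto intro: star.intros)
  next
    assume "\<exists>w1 w2 x1 x2. w = w1 @ w2 \<and> w1 \<in> star A
            \<and> x = x1 @ x2 \<and> w2 @ x1 \<in> A \<and> x2 \<in> star A"
    then obtain w1 w2 x1 x2 where "w = w1 @ w2" "w1 \<in> star A"
            "x = x1 @ x2" "w2 @ x1 \<in> A" "x2 \<in> star A" by blast
    then show ?thesis by (auto simp: conc_def Deriv_def)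
  qed
next
  fix x assume "x \<in> (if w \<in> star A then star A else {}) \<union>
     (\<Union>w2\<in>{w2. \<exists>w1. w = w1 @ w2 \<and> w1 \<in> star A}. conc (Deriv w2 A) (star A))"
  then show "x \<in> Deriv w (star A)"
  proof
    assume "x \<in> (if w \<in> star A then star A else {})"
    then show ?thesis by (auto simp: Deriv_def split: if_splits intro: star_app)
  next
    assume "x \<in> (\<Union>w2\<in>{w2. \<exists>w1. w = w1 @ w2 \<and> w1 \<in> star A}. conc (Deriv w2 A) (star A))"
    then obtain w1 w2 a b where "w = w1 @ w2" "w1 \<in> star A" "x = a @ b" "w2 @ a \<in> A" "b \<in> star A"
      by (auto simp: conc_def Deriv_def)
    then have "w @ x = w1 @ ((w2 @ a) @ b)" by simp
    moreover have "w1 @ ((w2 @ a) @ b) \<in> star A"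
      using \<open>w1 \<in> star A\<close> \<open>w2 @ a \<in> A\<close> \<open>b \<in> star A\<close> by (intro star_app st_app)
    ultimately show ?thesis by (simp add: Deriv_def)
  qed
qed

lemma Deriv_conc:
  "Deriv w (conc A B) = conc (Deriv w A) B \<union>
     (\<Union>w2\<in>{w2. \<exists>w1. w = w1 @ w2 \<and> w1 \<in> A}. Deriv w2 B)"
proof (intro equalityI subsetI)
  fix x assume "x \<in> Deriv w (conc A B)"
  then obtain a b where ab: "w @ x = a @ b" "a \<in> A" "b \<in> B" by (auto simp: Deriv_def conc_def)
  from ab(1) obtain us where "w = a @ us \<and> us @ x = b \<or> w @ us = a \<and> x = us @ b"
    by (auto simp: append_eq_append_conv2)
  then show "x \<in> conc (Deriv w A) B \<union>
     (\<Union>w2\<in>{w2. \<exists>w1. w = w1 @ w2 \<and> w1 \<in> A}. Deriv w2 B)"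
    using ab by (auto simp: Deriv_def conc_def)
next
  fix x assume "x \<in> conc (Deriv w A) B \<union>
     (\<Union>w2\<in>{w2. \<exists>w1. w = w1 @ w2 \<and> w1 \<in> A}. Deriv w2 B)"
  then show "x \<in> Deriv w (conc A B)"
    by (auto simp: Deriv_def conc_def) (metis append.assoc)+
qed

lemma finite_derivs: "finite (range (\<lambda>w. Deriv w (Lr r)))"
proof (induction r)
  case Eps
  have "range (\<lambda>w. Deriv w (Lr (Eps::'a rexp))) \<subseteq> {{[]},{}}"
    by (auto simp: Deriv_def)
  then show ?case by (rule finite_subset) simp
next
  case (Atom x)
  have "range (\<lambda>w. Deriv w (Lr (Atom x))) \<subseteq> {Lr (Atom x), {[]},{}}"
  proof
    fix X assume "X \<in> range (\<lambda>w. Deriv w (Lr (Atom x)))"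
    then obtain w where X: "X = Deriv w (Lr (Atom x))" by auto
    show "X \<in> {Lr (Atom x), {[]},{}}"
    proof (cases w)
      case Nil then show ?thesis using X by (simp add: Deriv_def)
    next
      case (Cons a w')
      then show ?thesis using X by (cases w') (auto simp: Deriv_def)
    qed
  qed
  then show ?case by (rule finite_subset) simp
next
  case (Plus r1 r2)
  have "range (\<lambda>w. Deriv w (Lr (Plus r1 r2))) \<subseteq> (\<lambda>(X,Y). X \<union> Y) `
     (range (\<lambda>w. Deriv w (Lr r1)) \<times> range (\<lambda>w. Deriv w (Lr r2)))"
  proof
    fix Z assume "Z \<in> range (\<lambda>w. Deriv w (Lr (Plus r1 r2)))"
    then obtain w where Z: "Z = Deriv w (Lr (Plus r1 r2))" by auto
    show "Z \<in> (\<lambda>(X,Y). X \<union> Y) `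
     (range (\<lambda>w. Deriv w (Lr r1)) \<times> range (\<lambda>w. Deriv w (Lr r2)))"
      by (rule image_eqI[of _ _ "(Deriv w (Lr r1), Deriv w (Lr r2))"]) (auto simp: Z Deriv_def)
  qed
  then show ?case by (rule finite_subset) (use Plus in auto)
next
  case (Conc r1 r2)
  have "range (\<lambda>w. Deriv w (Lr (Conc r1 r2))) \<subseteq> (\<lambda>(X,S). conc X (Lr r2) \<union> \<Union>S) `
     (range (\<lambda>w. Deriv w (Lr r1)) \<times> Pow (range (\<lambda>w. Deriv w (Lr r2))))"
  proof
    fix Z assume "Z \<in> range (\<lambda>w. Deriv w (Lr (Conc r1 r2)))"
    then obtain w where Z: "Z = Deriv w (Lr (Conc r1 r2))" by auto
    show "Z \<in> (\<lambda>(X,S). conc X (Lr r2) \<union> \<Union>S) `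
     (range (\<lambda>w. Deriv w (Lr r1)) \<times> Pow (range (\<lambda>w. Deriv w (Lr r2))))"
      unfolding Z Lr.simps Deriv_conc
      by (rule image_eqI[of _ _ "(Deriv w (Lr r1), (\<lambda>w2. Deriv w2 (Lr r2)) ` {w2. \<exists>w1. w = w1 @ w2 \<and> w1 \<in> Lr r1})"]) auto
  qed
  then show ?case by (rule finite_subset) (use Conc in auto)
next
  case (Star r)
  have "range (\<lambda>w. Deriv w (Lr (Star r))) \<subseteq> (\<lambda>(X,S). X \<union> (\<Union>Y\<in>S. conc Y (star (Lr r)))) `
     ({star (Lr r), {}} \<times> Pow (range (\<lambda>w. Deriv w (Lr r))))"
  proof
    fix Z assume "Z \<in> range (\<lambda>w. Deriv w (Lr (Star r)))"
    then obtain w where Z: "Z = Deriv w (Lr (Star r))" by auto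
    show "Z \<in> (\<lambda>(X,S). X \<union> (\<Union>Y\<in>S. conc Y (star (Lr r)))) `
     ({star (Lr r), {}} \<times> Pow (range (\<lambda>w. Deriv w (Lr r))))"
      unfolding Z Lr.simps Deriv_star
      by (rule image_eqI[of _ _ "(if w \<in> star (Lr r) then star (Lr r) else {}, (\<lambda>w2. Deriv w2 (Lr r)) ` {w2. \<exists>w1. w = w1 @ w2 \<and> w1 \<in> star (Lr r)})"]) auto
  qed
  then show ?case by (rule finite_subset) (use Star in auto)
qed

lemma map_upt_split:
  "i \<le> k \<Longrightarrow> k \<le> j \<Longrightarrow> map w [i..<j] = map w [i..<k] @ map w [k..<j]"
  by (metis le_add_diff_inverse upt_add_eq_append map_append)

lemma map_upt_split2:
  assumes "map w [i..<j] = a @ b" "i \<le> j"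
  shows "i + length a \<le> j \<and> map w [i..<i + length a] = a \<and> map w [i + length a..<j] = b"
proof -
  have l: "j - i = length a + length b" using arg_cong[OF assms(1), of length] by simp
  hence k: "i + length a \<le> j" using assms(2) by linarith
  have "map w [i..<j] = map w [i..<i + length a] @ map w [i + length a..<j]"
    using k by (intro map_upt_split) auto
  with assms have "map w [i..<i + length a] @ map w [i + length a..<j] = a @ b" by simp
  then show ?thesis using k by (subst (asm) append_eq_append_conv) auto
qed

lemma matches_Lr1: "matches w i j r \<Longrightarrow> i \<le> j \<and> map w [i..<j] \<in> Lr r"
proof (induction rule: matches.induct)
  case (m_conc i k j w r1 r2)
  then show ?case using map_upt_split[of i k j w] by (auto simp: conc_def)
next
  case (m_starS i k j w r)
  then show ?case using map_upt_split[of i k j w] by (auto intro: st_app)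
qed (auto intro: st_nil)

lemma matches_Lr2: "i \<le> j \<Longrightarrow> map w [i..<j] \<in> Lr r \<Longrightarrow> matches w i j r"
proof (induction r arbitrary: i j)
  case Eps
  then show ?case by (auto intro: matches.intros)
next
  case (Atom x)
  then obtain a where a: "map w [i..<j] = [a]" "a \<in> sem_atomic x" by auto
  moreover have "j = Suc i" using arg_cong[OF a(1), of length] by simp
  ultimately show ?case by (auto intro: matches.intros)
next
  case (Plus r1 r2)
  then show ?case by (auto intro: matches.intros)
next
  case (Conc r1 r2)
  then obtain a b where ab: "map w [i..<j] = a @ b" "a \<in> Lr r1" "b \<in> Lr r2" by (auto simp: conc_def)
  from map_upt_split2[OF ab(1) Conc.prems(1)] ab Conc.IH show ?case
    by (intro m_conc[of i "i + length a"]) auto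
next
  case (Star r)
  have "x \<in> star (Lr r) \<Longrightarrow> map w [i..<j] = x \<Longrightarrow> i \<le> j \<Longrightarrow> matches w i j (Star r)" for x
  proof (induction x arbitrary: i rule: star.induct)
    case st_nil
    then have "j = i" using arg_cong[OF st_nil(1), of length] by simp
    then show ?case by (auto intro: matches.intros)
  next
    case (st_app a y)
    note sp = map_upt_split2[OF st_app.prems(1) st_app.prems(2)]
    show ?case
    proof (cases "a = []")
      case True then show ?thesis using st_app by simp
    next
      case False
      then show ?thesis using sp st_app Star.IH
        by (intro m_starS[of i "i + length a"]) auto
    qed
  qed
  then show ?case using Star.prems by auto
qed

lemma matches_Lr: "matches w i j r \<longleftrightarrow> i \<le> j \<and> map w [i..<j] \<in> Lr r"
  using matches_Lr1 matches_Lr2 by blast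

lemma lang_Lr: "lang r = Lr r"
  by (auto simp: lang_def matches_Lr map_nth)


lemma dfa_exists:
  fixes L :: "'a list set"
  assumes fin: "finite (range (\<lambda>w. Deriv w L))"
  shows "\<exists>A. is_dfa A \<and> dfa_lang A = L"
proof -
  define S where "S = range (\<lambda>w. Deriv w L)"
  define N where "N = card S"
  obtain g where g: "bij_betw g {0..<N} S"
    using ex_bij_betw_nat_finite[of S] fin unfolding S_def N_def by blast
  define idx where "idx = the_inv_into {0..<N} g"
  have idx_in: "idx X \<in> {0..<N}" if "X \<in> S" for X
    using g that the_inv_into_into[of g "{0..<N}" X "{0..<N}"] unfolding idx_def bij_betw_def
    by simp
  have g_idx: "g (idx X) = X" if "X \<in> S" for X
    using g that unfolding idx_def by (simp add: bij_betw_def f_the_inv_into_f)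
  have g_in: "g q \<in> S" if "q \<in> {0..<N}" for q
    using g that by (auto simp: bij_betw_def)
  have DS: "Deriv [a] X \<in> S" if "X \<in> S" for a X
    using that unfolding S_def by (auto simp: Deriv_Deriv)
  define \<delta> where "\<delta> q a = idx (Deriv [a] (g q))" for q a
  define F where "F = {q \<in> {0..<N}. [] \<in> g q}"
  have LS: "L \<in> S" unfolding S_def by (auto intro: range_eqI[of _ _ "[]"] simp: Deriv_def)
  have fold: "q \<in> {0..<N} \<Longrightarrow> foldl \<delta> q w = idx (Deriv w (g q))" for q w
  proof (induction w arbitrary: q)
    case Nil
    have "Deriv [] (g q) = g q" by (simp add: Deriv_def)
    moreover have "idx (g q) = q" using g Nil unfolding idx_def bij_betw_def
      by (simp add: the_inv_into_f_f)
    ultimately show ?case by simp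
  next
    case (Cons a w)
    have "\<delta> q a \<in> {0..<N}" unfolding \<delta>_def using Cons.prems by (intro idx_in DS g_in)
    then have "foldl \<delta> q (a # w) = idx (Deriv w (g (\<delta> q a)))" using Cons.IH by simp
    also have "g (\<delta> q a) = Deriv [a] (g q)" unfolding \<delta>_def using Cons.prems
      by (intro g_idx DS g_in)
    finally show ?case by (simp add: Deriv_Deriv)
  qed
  define A where "A = ({0..<N}, idx L, \<delta>, F)"
  have "is_dfa A" unfolding A_def is_dfa_def F_def \<delta>_def
    using idx_in LS DS g_in by auto
  moreover have "dfa_lang A = L"
  proof -
    have "foldl \<delta> (idx L) w \<in> F \<longleftrightarrow> w \<in> L" for w
    proof -
      have q0: "idx L \<in> {0..<N}" using idx_in LS .
      have "foldl \<delta> (idx L) w = idx (Deriv w L)" using fold[OF q0] g_idx[OF LS] by simp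
      moreover have DwS: "Deriv w L \<in> S" unfolding S_def by simp
      ultimately show ?thesis unfolding F_def using idx_in[OF DwS] g_idx[OF DwS]
        by (simp add: Deriv_def)
    qed
    then show ?thesis unfolding A_def dfa_lang_def by auto
  qed
  ultimately show ?thesis by blast
qed


lemma foldl_in: "is_dfa (Q, q0, \<delta>, F) \<Longrightarrow> q \<in> Q \<Longrightarrow> foldl \<delta> q w \<in> Q"
  by (induction w arbitrary: q) (auto simp: is_dfa_def)

lemma period_mult:
  fixes n p l t :: nat
  assumes "\<And>p. n \<le> p \<Longrightarrow> W (p + l) = W p" "n \<le> p"
  shows "W (p + t * l) = W p"
proof (induction t)
  case (Suc t)
  have "W (p + Suc t * l) = W ((p + t * l) + l)" by (simp add: algebra_simps)
  also have "\<dots> = W (p + t * l)" using assms by (intro assms(1)) auto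
  finally show ?case using Suc by simp
qed simp

lemma core:
  assumes dfa: "is_dfa (Q, q0, \<delta>, F)" and cardQ: "card Q = m"
    and per: "\<And>p. n \<le> p \<Longrightarrow> W (p + l) = W p" and l: "0 < l" and i: "i \<le> n"
  shows "n < j \<Longrightarrow> foldl \<delta> q0 (map W [i..<j]) \<in> F \<Longrightarrow>
    \<exists>k. n \<le> k \<and> k \<le> n + m * l \<and> foldl \<delta> q0 (map W [i..<k]) \<in> F \<and> k mod l = j mod l"
proof (induction j rule: less_induct)
  case (less j)
  show ?case
  proof (cases "j \<le> n + m * l")
    case True
    then show ?thesis using less.prems by (intro exI[of _ j]) auto
  next
    case False
    define st where "st p = foldl \<delta> q0 (map W [i..<p])" for p
    define f where "f t = st (j - t * l)" for t
    have finQ: "finite Q" and q0: "q0 \<in> Q" using dfa by (auto simp: is_dfa_def)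
    have "f ` {0..m} \<subseteq> Q" unfolding f_def st_def using foldl_in[OF dfa q0] by auto
    then have "card (f ` {0..m}) \<le> m" using card_mono[OF finQ] cardQ by auto
    then have "\<not> inj_on f {0..m}" using pigeonhole[of f "{0..m}"] by simp
    then obtain t1 t2 where t: "t1 \<le> m" "t2 \<le> m" "t1 < t2" "f t1 = f t2"
      unfolding inj_on_def by (metis atLeastAtMost_iff linorder_neq_iff)
    define pa where "pa = j - t2 * l"
    define pb where "pb = j - t1 * l"
    define d where "d = (t2 - t1) * l"
    have t2l: "t2 * l \<le> m * l" using t by simp
    have t1l: "t1 * l < t2 * l" using t l by simp
    have pa_ge: "n < pa" using False t2l unfolding pa_def by linarith
    have t2j: "t2 * l \<le> j" using False t2l by linarith
    have dd: "(t2 - t1) * l = t2 * l - t1 * l" by (simp add: diff_mult_distrib)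
    have pb_eq: "pb = pa + d" unfolding pa_def pb_def d_def dd using t2j t1l by linarith
    have d_pos: "0 < d" using t l unfolding d_def by simp
    have pbj: "pb \<le> j" unfolding pb_def by simp
    have stab: "st pa = st pb" using t(4) unfolding f_def pa_def pb_def by simp
    have eqseg: "map W [pb..<j] = map W [pa..<j - d]"
    proof (rule nth_equalityI)
      show "length (map W [pb..<j]) = length (map W [pa..<j - d])" using pb_eq by simp
    next
      fix s assume "s < length (map W [pb..<j])"
      then have s: "pb + s < j" by simp
      have "W (pb + s) = W ((pa + s) + (t2 - t1) * l)" using pb_eq unfolding d_def
        by (simp add: algebra_simps)
      also have "\<dots> = W (pa + s)" using pa_ge by (intro period_mult[where W=W and n=n and l=l, OF per]) auto
      finally show "map W [pb..<j] ! s = map W [pa..<j - d] ! s" using s pb_eq by simp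
    qed
    have ipa: "i \<le> pa" using i pa_ge by simp
    have "foldl \<delta> q0 (map W [i..<j - d]) = foldl \<delta> (st pa) (map W [pa..<j - d])"
      unfolding st_def using map_upt_split[of i pa "j - d" W] ipa pb_eq pbj by simp
    also have "\<dots> = foldl \<delta> (st pb) (map W [pb..<j])" using stab eqseg by simp
    also have "\<dots> = foldl \<delta> q0 (map W [i..<j])"
      unfolding st_def using map_upt_split[of i pb j W] ipa pb_eq pbj by simp
    finally have acc: "foldl \<delta> q0 (map W [i..<j - d]) \<in> F" using less.prems by simp
    have lt: "j - d < j" and gt: "n < j - d" using pb_eq pbj d_pos pa_ge by auto
    have "j mod l = (j - d + (t2 - t1) * l) mod l" using pb_eq pbj unfolding d_def by simp
    then have md: "(j - d) mod l = j mod l" by simp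
    from less.IH[OF lt gt acc] md show ?thesis by auto
  qed
qed

lemma lasso_per: "v \<noteq> [] \<Longrightarrow> length u \<le> p \<Longrightarrow> lasso u v (p + length v) = lasso u v p"
proof -
  assume "v \<noteq> []" "length u \<le> p"
  then have "p + length v - length u = (p - length u) + length v" by simp
  then have "(p + length v - length u) mod length v = (p - length u) mod length v" by simp
  then show ?thesis using \<open>length u \<le> p\<close> by (simp add: lasso_def)
qed

theorem lemma2:
  fixes u v :: "('p::finite) set list" and \<rho> :: "'p rexp" and i j m :: nat
  assumes "v \<noteq> []"
    and "m = min_dfa_size (lang \<rho>)"
    and "matches (lasso u v) i j \<rho>"
    and "i \<le> length u" and "length u < j"
  shows "\<exists>k. length u \<le> k \<and> k \<le> length u + m * length v
           \<and> matches (lasso u v) i k \<rho> \<and> k mod length v = j mod length v"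
proof -
  have "\<exists>A. is_dfa A \<and> dfa_lang A = lang \<rho>"
    using dfa_exists[OF finite_derivs[of \<rho>]] by (simp add: lang_Lr)
  then have "\<exists>n A. is_dfa A \<and> dfa_lang A = lang \<rho> \<and> card (dfa_states A) = n" by blast
  then obtain A where A: "is_dfa A" "dfa_lang A = lang \<rho>" "card (dfa_states A) = m"
    using LeastI_ex[of "\<lambda>n. \<exists>A. is_dfa A \<and> dfa_lang A = lang \<rho> \<and> card (dfa_states A) = n"]
    unfolding assms(2) min_dfa_size_def by blast
  obtain Q q0 \<delta> F where AA: "A = (Q, q0, \<delta>, F)" by (cases A) auto
  have mem: "matches (lasso u v) i k \<rho> \<longleftrightarrow> i \<le> k \<and> foldl \<delta> q0 (map (lasso u v) [i..<k]) \<in> F" for k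
    using A(2) unfolding matches_Lr lang_Lr[symmetric] AA dfa_lang_def by auto
  have "\<exists>k. length u \<le> k \<and> k \<le> length u + m * length v \<and>
      foldl \<delta> q0 (map (lasso u v) [i..<k]) \<in> F \<and> k mod length v = j mod length v"
  proof (rule core[where W="lasso u v" and n="length u"])
    show "is_dfa (Q, q0, \<delta>, F)" using A(1) AA by simp
    show "card Q = m" using A(3) AA by (simp add: dfa_states_def)
    show "lasso u v (p + length v) = lasso u v p" if "length u \<le> p" for p
      using lasso_per[OF assms(1) that] .
    show "0 < length v" using assms(1) by simp
    show "i \<le> length u" by fact
    show "length u < j" by fact
    show "foldl \<delta> q0 (map (lasso u v) [i..<j]) \<in> F" using mem assms(3) by blast
  qed
  then show ?thesis using mem assms(4) by (meson le_trans)
qed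

end
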